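(* For every $N\ge2$, the probability measure $P^{1,N}$ on $\mathbb{R}^2$ with density $\varphi^{1,N}(x)=\pi^{-1}e^{-N|x|^2}\sum_{\ell=0}^{N-1}\frac{(N|x|^2)^\ell}{\ell!}$ is log-concave (i.e. $x\mapsto N|x|^2-\log\sum_{\ell=0}^{N-1}\frac{(N|x|^2)^\ell}{\ell!}$ is convex on $\mathbb{R}^2$), and its second moment equals $\int_{\mathbb{R}^2}|x|^2\,P^{1,N}(\mathrm{d}x)=\frac{N+1}{2N}$.
   Context: $P^{1,N}$ is the one-particle marginal of the complex Ginibre ensemble (the Coulomb gas $P^N$ with $\beta_N=N^2$). *)

theory Defs
  imports "HOL-Analysis.Analysis" "HOL-Probability.Probability"
begin

definition ginibre_density :: "nat \<Rightarrow> real^2 \<Rightarrow> real" where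
  "ginibre_density N x =
     (1 / pi) * exp (- real N * norm x ^ 2) *
     (\<Sum>l<N. (real N * norm x ^ 2) ^ l / fact l)"

definition ginibre_marginal :: "nat \<Rightarrow> (real^2) measure" where
  "ginibre_marginal N = density lborel (\<lambda>x. ennreal (ginibre_density N x))"

definition ginibre_potential :: "nat \<Rightarrow> real^2 \<Rightarrow> real" where
  "ginibre_potential N x =
     real N * norm x ^ 2 - ln (\<Sum>l<N. (real N * norm x ^ 2) ^ l / fact l)"

end

theory Submission
  imports Defs
begin


definition EG :: "real \<Rightarrow> nat \<Rightarrow> real \<Rightarrow> real" where
  "EG c M r = (\<Sum>l<M. (c * r^2) ^ l / fact l)"
definition EG' :: "real \<Rightarrow> nat \<Rightarrow> real \<Rightarrow> real" where
  "EG' c M r = (\<Sum>l<M. real l * (c * r^2) ^ (l - 1) * (c * (2 * r)) / fact l)"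

lemma EG_deriv: "(EG c M has_real_derivative EG' c M r) (at r)"
  unfolding EG_def EG'_def
  apply (rule DERIV_sum)
  apply (auto intro!: derivative_eq_intros)
  done

lemma EG_pos: "M \<ge> 1 \<Longrightarrow> c \<ge> 0 \<Longrightarrow> EG c M r > 0"
proof -
  assume "M \<ge> 1" "c \<ge> 0"
  have "EG c M r = (\<Sum>l\<in>insert 0 ({..<M}-{0}). (c * r^2) ^ l / fact l)"
    unfolding EG_def using \<open>M\<ge>1\<close> by (intro sum.cong) auto
  also have "\<dots> = 1 + (\<Sum>l\<in>{..<M}-{0}. (c * r^2) ^ l / fact l)"
    by (subst sum.insert) auto
  also have "\<dots> > 0"
    using \<open>c\<ge>0\<close> by (intro add_pos_nonneg sum_nonneg) auto
  finally show ?thesis .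
qed

lemma EG_ident: "2 * c * r * EG c (Suc M) r - EG' c (Suc M) r
   = 2 * c * r * (c * r^2) ^ M / fact M"
proof (induction M)
  case 0
  then show ?case by (simp add: EG_def EG'_def)
next
  case (Suc M)
  have a: "EG c (Suc (Suc M)) r = EG c (Suc M) r + (c * r^2) ^ Suc M / fact (Suc M)"
    unfolding EG_def by simp
  have b: "EG' c (Suc (Suc M)) r = EG' c (Suc M) r + 2 * c * r * (c * r^2) ^ M / fact M"
  proof -
    have f: "(fact (Suc M) :: real) = real (Suc M) * fact M" by simp
    have "real (Suc M) * (c * r\<^sup>2) ^ (Suc M - 1) * (c * (2 * r)) / fact (Suc M)
        = 2 * c * r * (c * r^2) ^ M / fact M"
      unfolding f by (simp del: of_nat_Suc fact_Suc)
    then show ?thesis unfolding EG'_def by simp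
  qed
  have g: "2*c*r*(X + T) - (Y + S) = (2*c*r*X - Y) - S + 2*c*r*T" for X Y T S :: real
    by algebra
  show ?case unfolding a b g Suc.IH by simp
qed

lemma term_mono0:
  fixes a b A B :: real
  assumes "0 \<le> a" "a \<le> b" "0 \<le> A" "A \<le> B" "l \<le> K"
  shows "a * A^K * (B^l / fact l) \<le> b * B^K * (A^l / fact l)"
proof -
  have K: "K = l + (K - l)" using assms by simp
  have eA: "A^K = A^l * A^(K-l)" by (metis K power_add)
  have eB: "B^K = B^l * B^(K-l)" by (metis K power_add)
  have "a * A^(K-l) \<le> b * B^(K-l)"
    using assms by (intro mult_mono power_mono) auto
  then have "(A^l * B^l / fact l) * (a * A^(K-l)) \<le> (A^l * B^l / fact l) * (b * B^(K-l))"
    using assms by (intro mult_left_mono) auto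
  moreover have "a * A^K * (B^l / fact l) = (A^l * B^l / fact l) * (a * A^(K-l))"
    unfolding eA by (simp add: field_simps)
  moreover have "b * B^K * (A^l / fact l) = (A^l * B^l / fact l) * (b * B^(K-l))"
    unfolding eB by (simp add: field_simps)
  ultimately show ?thesis by linarith
qed

lemma term_mono:
  fixes a b c :: real
  assumes "0 \<le> a" "a \<le> b" "0 \<le> c" "l \<le> K"
  shows "a * (c*a^2)^K * ((c*b^2)^l / fact l) \<le> b * (c*b^2)^K * ((c*a^2)^l / fact l)"
  using assms by (intro term_mono0) (auto intro!: mult_left_mono power_mono)

lemma G_mono:
  fixes a b c :: real
  assumes "0 \<le> a" "a \<le> b" "0 \<le> c"
  shows "a * (c*a^2)^K / EG c (Suc K) a \<le> b * (c*b^2)^K / EG c (Suc K) b"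
proof -
  have pa: "EG c (Suc K) a > 0" and pb: "EG c (Suc K) b > 0" using EG_pos assms by auto
  have "a * (c*a^2)^K * EG c (Suc K) b = (\<Sum>l<Suc K. a * (c*a^2)^K * ((c*b^2)^l / fact l))"
    unfolding EG_def by (simp only: sum_distrib_left)
  also have "\<dots> \<le> (\<Sum>l<Suc K. b * (c*b^2)^K * ((c*a^2)^l / fact l))"
    by (intro sum_mono term_mono assms) auto
  also have "\<dots> = b * (c*b^2)^K * EG c (Suc K) a"
    unfolding EG_def by (simp only: sum_distrib_left)
  finally show ?thesis using pa pb by (simp add: divide_simps)
qed

definition FF :: "real \<Rightarrow> nat \<Rightarrow> real \<Rightarrow> real" where
  "FF c M r = c * r^2 - ln (EG c M r)"

lemma FF_deriv:
  assumes "0 \<le> c"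
  shows "(FF c (Suc K) has_real_derivative
          2 * c * (r * (c*r^2)^K / EG c (Suc K) r) / fact K) (at r)"
proof -
  have p: "EG c (Suc K) r > 0" using EG_pos assms by auto
  have "(FF c (Suc K) has_real_derivative c * (2 * r) - EG' c (Suc K) r / EG c (Suc K) r) (at r)"
    unfolding FF_def using p
    by (auto intro!: derivative_eq_intros EG_deriv)
  moreover have "c * (2 * r) - EG' c (Suc K) r / EG c (Suc K) r
      = (2 * c * r * EG c (Suc K) r - EG' c (Suc K) r) / EG c (Suc K) r"
    using p by (simp add: field_simps)
  moreover have "\<dots> = 2 * c * (r * (c*r^2)^K / EG c (Suc K) r) / fact K"
    unfolding EG_ident by (simp add: field_simps)
  ultimately show ?thesis by simp
qed

lemma FF_convex:
  assumes "0 \<le> c"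
  shows "convex_on {0..} (FF c (Suc K))"
proof (rule convex_on_realI[OF _ FF_deriv[OF assms]])
  show "connected {0::real..}" by simp
  fix x y :: real assume "x \<in> {0..}" "y \<in> {0..}" "x \<le> y"
  then show "2 * c * (x * (c*x^2)^K / EG c (Suc K) x) / fact K \<le> 2 * c * (y * (c*y^2)^K / EG c (Suc K) y) / fact K"
    using G_mono[of x y c K] assms
    by (intro divide_right_mono mult_left_mono) auto
qed

lemma FF_mono:
  assumes "0 \<le> c" "0 \<le> a" "a \<le> b"
  shows "FF c (Suc K) a \<le> FF c (Suc K) b"
proof (rule DERIV_nonneg_imp_increasing_open[OF assms(3)])
  fix x assume "a < x" "x < b"
  then show "\<exists>y. (FF c (Suc K) has_real_derivative y) (at x) \<and> 0 \<le> y"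
    using FF_deriv[OF assms(1), of K x] EG_pos[of "Suc K" c x] assms
    by (intro exI[of _ "2 * c * (x * (c*x^2)^K / EG c (Suc K) x) / fact K"] conjI)
       (auto intro!: divide_nonneg_pos mult_nonneg_nonneg)
next
  show "continuous_on {a..b} (FF c (Suc K))"
    using FF_deriv[OF assms(1)] by (meson DERIV_isCont continuous_at_imp_continuous_on)
qed

lemma FF_norm_convex:
  assumes "0 \<le> c"
  shows "convex_on UNIV (\<lambda>x::'a::real_normed_vector. FF c (Suc K) (norm x))"
proof (rule convex_onI)
  fix t :: real and x y :: 'a assume t: "0 < t" "t < 1"
  have "norm ((1 - t) *\<^sub>R x + t *\<^sub>R y) \<le> (1 - t) * norm x + t * norm y"
    using t by (metis abs_of_nonneg less_eq_real_def norm_scaleR norm_triangle_ineq diff_ge_0_iff_ge)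
  then have "FF c (Suc K) (norm ((1 - t) *\<^sub>R x + t *\<^sub>R y)) \<le> FF c (Suc K) ((1 - t) * norm x + t * norm y)"
    by (intro FF_mono assms) auto
  also have "\<dots> \<le> (1 - t) * FF c (Suc K) (norm x) + t * FF c (Suc K) (norm y)"
    using convex_onD[OF FF_convex[OF assms], of t "norm x" "norm y"] t by auto
  finally show "FF c (Suc K) (norm ((1 - t) *\<^sub>R x + t *\<^sub>R y)) \<le> (1 - t) * FF c (Suc K) (norm x) + t * FF c (Suc K) (norm y)" .
qed simp

lemma potential_convex:
  assumes "N \<ge> 1"
  shows "convex_on UNIV (ginibre_potential N)"
proof -
  obtain K where K: "N = Suc K" using assms by (cases N) auto
  have "ginibre_potential N = (\<lambda>x. FF (real N) (Suc K) (norm x))"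
    unfolding ginibre_potential_def FF_def EG_def K by simp
  then show ?thesis using FF_norm_convex[of "real N" K] by simp
qed


definition DQ :: "real measure" where
  "DQ = density lborel (\<lambda>s. ennreal pi * indicator {0..} s)"

lemma preimage_eq:
  "(\<lambda>x::real^2. norm x ^ 2) -` {..a} = (if a < 0 then {} else cball 0 (sqrt a))"
proof (cases "a < 0")
  case True
  then show ?thesis by (auto dest: order.trans[OF zero_le_power2])
next
  case False
  have "norm x ^ 2 \<le> a \<longleftrightarrow> norm x \<le> sqrt a" for x :: "real^2"
  proof
    assume "norm x ^ 2 \<le> a" then show "norm x \<le> sqrt a" by (rule real_le_rsqrt)
  next
    assume "norm x \<le> sqrt a"
    then have "norm x ^ 2 \<le> sqrt a ^ 2" by (intro power_mono) auto
    then show "norm x ^ 2 \<le> a" using False by simp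
  qed
  then show ?thesis using False by auto
qed

lemma distr_eq:
  "distr (lborel :: (real^2) measure) borel (\<lambda>x. norm x ^ 2) = DQ"
proof (rule measure_eqI_generator_eq_countable[where \<Omega>=UNIV and E="range (\<lambda>a::real. {..a})"
      and A="range (\<lambda>n::nat. {..real n})"])
  show "Int_stable (range (\<lambda>a::real. {..a}))"
    by (auto simp: Int_stable_def)
  show "range (\<lambda>a::real. {..a}) \<subseteq> Pow UNIV" by simp
  show "sets (distr lborel borel (\<lambda>x::real^2. norm x ^ 2)) = sigma_sets UNIV (range atMost)"
    by (simp add: borel_eq_atMost)
  show "sets DQ = sigma_sets UNIV (range atMost)"
    by (simp add: DQ_def borel_eq_atMost)
  have em: "emeasure (distr (lborel :: (real^2) measure) borel (\<lambda>x. norm x ^ 2)) {..a} = ennreal (pi * max a 0)" for a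
  proof -
    have "emeasure (distr (lborel :: (real^2) measure) borel (\<lambda>x. norm x ^ 2)) {..a}
        = emeasure lborel ((\<lambda>x::real^2. norm x ^ 2) -` {..a})"
      by (subst emeasure_distr) auto
    also have "\<dots> = ennreal (pi * max a 0)"
    proof (cases "a < 0")
      case True then show ?thesis by (simp add: preimage_eq)
    next
      case False
      then show ?thesis by (simp add: preimage_eq emeasure_cball unit_ball_vol_2)
    qed
    finally show ?thesis .
  qed
  have em2: "emeasure DQ {..a} = ennreal (pi * max a 0)" for a
  proof -
    have "emeasure DQ {..a} = (\<integral>\<^sup>+ s. ennreal pi * indicator {0..a} s \<partial>lborel)"
      unfolding DQ_def
      by (subst emeasure_density) (auto intro!: nn_integral_cong split: split_indicator)
    also have "\<dots> = ennreal (pi * max a 0)"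
      by (subst nn_integral_cmult_indicator) (auto simp: ennreal_mult max_def emeasure_lborel_Icc_eq)
    finally show ?thesis .
  qed
  show "emeasure (distr lborel borel (\<lambda>x::real^2. norm x ^ 2)) X = emeasure DQ X"
    if "X \<in> range (\<lambda>a::real. {..a})" for X
    using that em em2 by auto
  show "range (\<lambda>n::nat. {..real n}) \<subseteq> range atMost" by auto
  show "\<Union> (range (\<lambda>n::nat. {..real n})) = UNIV"
    by (auto intro: real_arch_simple)
  show "countable (range (\<lambda>n::nat. {..real n}))" by simp
  show "emeasure (distr lborel borel (\<lambda>x::real^2. norm x ^ 2)) X \<noteq> \<infinity>"
    if "X \<in> range (\<lambda>n::nat. {..real n})" for X
    using that em by auto
qed

lemma radial_integral:
  assumes [measurable]: "g \<in> borel_measurable borel"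
  shows "(\<integral>\<^sup>+ x. g (norm x ^ 2) \<partial>(lborel :: (real^2) measure))
       = (\<integral>\<^sup>+ s. ennreal pi * indicator {0..} s * g s \<partial>lborel)"
proof -
  have "(\<integral>\<^sup>+ x. g (norm x ^ 2) \<partial>(lborel :: (real^2) measure))
       = (\<integral>\<^sup>+ s. g s \<partial>distr (lborel :: (real^2) measure) borel (\<lambda>x. norm x ^ 2))"
    by (subst nn_integral_distr) auto
  also have "\<dots> = (\<integral>\<^sup>+ s. g s \<partial>DQ)" by (simp add: distr_eq)
  also have "\<dots> = (\<integral>\<^sup>+ s. ennreal pi * indicator {0..} s * g s \<partial>lborel)"
    unfolding DQ_def by (subst nn_integral_density) auto
  finally show ?thesis .
qed


lemma erl_nonneg: "0 \<le> c \<Longrightarrow> 0 \<le> erlang_density l c s * s ^ i"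
  by (cases "s < 0") (auto simp: erlang_density_def)

lemma moment:
  assumes N: "N \<ge> 1"
  shows "(\<integral>\<^sup>+ x. ennreal (ginibre_density N x * (norm x ^ 2) ^ i) \<partial>(lborel :: (real^2) measure))
       = ennreal (\<Sum>l<N. fact (l+i) / (fact l * real N ^ i) / real N)"
proof -
  define g where "g s = ennreal ((1/pi) * exp (- real N * s) * (\<Sum>l<N. (real N * s) ^ l / fact l) * s ^ i)" for s
  have [measurable]: "g \<in> borel_measurable borel" unfolding g_def by measurable
  have "(\<integral>\<^sup>+ x. ennreal (ginibre_density N x * (norm x ^ 2) ^ i) \<partial>(lborel :: (real^2) measure))
      = (\<integral>\<^sup>+ x. g (norm x ^ 2) \<partial>(lborel :: (real^2) measure))"
    unfolding g_def ginibre_density_def by simp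
  also have "\<dots> = (\<integral>\<^sup>+ s. ennreal pi * indicator {0..} s * g s \<partial>lborel)"
    by (rule radial_integral) simp
  also have "\<dots> = (\<integral>\<^sup>+ s. (\<Sum>l<N. ennreal (1 / real N) * ennreal (erlang_density l (real N) s * s ^ i)) \<partial>lborel)"
  proof (intro nn_integral_cong)
    fix s :: real
    show "ennreal pi * indicator {0..} s * g s = (\<Sum>l<N. ennreal (1 / real N) * ennreal (erlang_density l (real N) s * s ^ i))"
    proof (cases "s < 0")
      case True then show ?thesis by (simp add: erlang_density_def)
    next
      case False
      have "(\<Sum>l<N. ennreal (1 / real N) * ennreal (erlang_density l (real N) s * s ^ i))
          = ennreal (\<Sum>l<N. (1 / real N) * (erlang_density l (real N) s * s ^ i))"
      proof -
        have "ennreal (\<Sum>l<N. (1 / real N) * (erlang_density l (real N) s * s ^ i))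
           = (\<Sum>l<N. ennreal ((1 / real N) * (erlang_density l (real N) s * s ^ i)))"
          by (rule sum_ennreal[symmetric]) (use erl_nonneg[of "real N" _ s i] in auto)
        also have "\<dots> = (\<Sum>l<N. ennreal (1 / real N) * ennreal (erlang_density l (real N) s * s ^ i))"
          by (intro sum.cong refl ennreal_mult') auto
        finally show ?thesis by simp
      qed
      also have "(\<Sum>l<N. (1 / real N) * (erlang_density l (real N) s * s ^ i))
          = pi * ((1/pi) * exp (- real N * s) * (\<Sum>l<N. (real N * s) ^ l / fact l) * s ^ i)"
        using False N
        by (auto simp: erlang_density_def sum_distrib_left sum_distrib_right power_mult_distrib
            intro!: sum.cong)
      moreover have "ennreal pi * indicator {0..} s * g s = ennreal (pi * ((1/pi) * exp (- real N * s) * (\<Sum>l<N. (real N * s) ^ l / fact l) * s ^ i))"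
        using False unfolding g_def by (simp add: ennreal_mult'[symmetric] del: mult_1_left)
      ultimately show ?thesis by simp
    qed
  qed
  also have "\<dots> = (\<Sum>l<N. ennreal (1 / real N) * (\<integral>\<^sup>+ s. ennreal (erlang_density l (real N) s * s ^ i) \<partial>lborel))"
    by (subst nn_integral_sum) (auto simp: nn_integral_cmult)
  also have "\<dots> = (\<Sum>l<N. ennreal (1 / real N) * ennreal (fact (l+i) / (fact l * real N ^ i)))"
    using N by (subst nn_integral_erlang_ith_moment) auto
  also have "\<dots> = ennreal (\<Sum>l<N. fact (l+i) / (fact l * real N ^ i) / real N)"
    by (subst sum_ennreal[symmetric]) (auto intro!: sum.cong simp: ennreal_mult[symmetric] mult_ac)
  finally show ?thesis .
qed


lemma gsum: "(\<Sum>l<N. real l + 1) = real N * (real N + 1) / 2"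
  by (induction N) (auto simp: field_simps)

theorem mainTheorem14:
  fixes N :: nat
  assumes "N \<ge> 2"
  shows "prob_space (ginibre_marginal N)
       \<and> convex_on UNIV (ginibre_potential N)
       \<and> integrable (ginibre_marginal N) (\<lambda>x. norm x ^ 2)
       \<and> (\<integral>x. norm x ^ 2 \<partial>ginibre_marginal N) = (real N + 1) / (2 * real N)"
proof -
  have N: "N \<ge> 1" using assms by simp
  have [measurable]: "ginibre_density N \<in> borel_measurable borel"
    unfolding ginibre_density_def by measurable
  have dnn: "0 \<le> ginibre_density N x" for x
    unfolding ginibre_density_def by (intro mult_nonneg_nonneg sum_nonneg) auto
  have "emeasure (ginibre_marginal N) UNIV = 1"
  proof -
    have "emeasure (ginibre_marginal N) UNIV = (\<integral>\<^sup>+ x. ennreal (ginibre_density N x * (norm x ^ 2) ^ 0) \<partial>lborel)"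
      unfolding ginibre_marginal_def by (subst emeasure_density) auto
    also have "\<dots> = ennreal (\<Sum>l<N. fact (l+0) / (fact l * real N ^ 0) / real N)"
      by (rule moment[OF N])
    also have "\<dots> = 1" using N by simp
    finally show ?thesis .
  qed
  then have P: "prob_space (ginibre_marginal N)"
    by (intro prob_spaceI) (simp add: ginibre_marginal_def)
  have nn: "(\<integral>\<^sup>+ x. ennreal (norm x ^ 2) \<partial>ginibre_marginal N) = ennreal ((real N + 1) / (2 * real N))"
  proof -
    have "(\<integral>\<^sup>+ x. ennreal (norm x ^ 2) \<partial>ginibre_marginal N)
        = (\<integral>\<^sup>+ x. ennreal (ginibre_density N x * (norm x ^ 2) ^ 1) \<partial>lborel)"
      unfolding ginibre_marginal_def
      by (subst nn_integral_density) (auto intro!: nn_integral_cong simp: ennreal_mult'[symmetric] dnn)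
    also have "\<dots> = ennreal (\<Sum>l<N. fact (l+1) / (fact l * real N ^ 1) / real N)"
      by (rule moment[OF N])
    also have "(\<Sum>l<N. fact (l+1) / (fact l * real N ^ 1) / real N) = (\<Sum>l<N. real l + 1) / (real N * real N)"
      by (auto simp: sum_divide_distrib intro!: sum.cong)
    also have "\<dots> = (real N + 1) / (2 * real N)"
      using N unfolding gsum by (simp add: field_simps)
    finally show ?thesis .
  qed
  have I: "integrable (ginibre_marginal N) (\<lambda>x. norm x ^ 2)"
    by (rule integrableI_nn_integral_finite[OF _ _ nn]) (auto simp: ginibre_marginal_def)
  have V: "(\<integral>x. norm x ^ 2 \<partial>ginibre_marginal N) = (real N + 1) / (2 * real N)"
    by (subst integral_eq_nn_integral) (auto simp: nn measurable_cong_sets[OF ginibre_marginal_def[THEN arg_cong[where f=sets], simplified] refl])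
  show ?thesis using P I V potential_convex[OF N] by simp
qed
end
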